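(* Let $\mathfrak g\xrightarrow{\mu}\mathfrak h$ be a crossed module of Lie algebras, $\phi:W\to V$ linear, $\rho$ a 2-representation on $\phi$, and $r\ge1$. Then, as maps $C^{p,q}_r(\mathfrak g_1,\phi)\to C^{p+1,q+1}_r(\mathfrak g_1,\phi)$, $$\delta^{(r)}\partial-\partial\delta^{(r)}=\delta_{(1)}\circ\Delta+\Delta\circ\delta_{(1)}.$$
   Context: Crossed module: Lie algebras $\mathfrak g,\mathfrak h$, Lie homomorphism $\mu$, action $\mathcal L:\mathfrak h\to\mathrm{Der}(\mathfrak g)$ with $\mu(\mathcal L_yx)=[y,\mu(x)]$, $\mathcal L_{\mu(x_0)}x_1=[x_0,x_1]$; $\mathfrak g\oplus_{\mathcal L}\mathfrak h$ has bracket $[(x_0,y_0),(x_1,y_1)]=([x_0,x_1]+\mathcal L_{y_0}x_1-\mathcal L_{y_1}x_0,[y_0,y_1])$. 2-representation: linear $\rho_0^1:\mathfrak h\to\mathfrak{gl}(W)$, $\rho_0^0:\mathfrak h\to\mathfrak{gl}(V)$, $\rho_1:\mathfrak g\to\mathrm{Hom}(V,W)$ with $\rho_0^1,\rho_0^0$ representations, $\phi\rho_0^1(y)=\rho_0^0(y)\phi$, $\rho_1([x_0,x_1])=\rho_1(x_0)\phi\rho_1(x_1)-\rho_1(x_1)\phi\rho_1(x_0)$, $\rho_0^0(\mu(x))=\phi\rho_1(x)$, $\rho_0^1(\mu(x))=\rho_1(x)\phi$, $\rho_1(\mathcal L_yx)=\rho_0^1(y)\rho_1(x)-\rho_1(x)\rho_0^0(y)$.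 $\mathfrak g_0=\mathfrak h$; for $p\ge1$, $\mathfrak g_p=\mathfrak g^p\oplus\mathfrak h$, elements $(x^0,\dots,x^{p-1};y)$, a Lie algebra via identification with composable strings $(a_0,\dots,a_{p-1})\in(\mathfrak g\oplus_{\mathcal L}\mathfrak h)^p$, $a_j=(x^j,y+\sum_{k>j}\mu(x^k))$, componentwise bracket. Face maps $\partial_k:\mathfrak g_{p+1}\to\mathfrak g_p$: $\partial_0(x^0,\dots,x^p;y)=(x^1,\dots,x^p;y)$, $\partial_k(\dots)=(x^0,\dots,x^{k-1}+x^k,\dots,x^p;y)$ ($0<k\le p$), $\partial_{p+1}(\dots)=(x^0,\dots,x^{p-1};y+\mu(x^p))$, componentwise on tuples; $\hat t_p(x^0,\dots,x^{p-1};y)=y+\sum\mu(x^j)$. $X(j),X(m,n)$: removal of entries. $C^{p,q}_r=\bigwedge^q\mathfrak g_p^*\otimes\bigwedge^r\mathfrak g^*\otimes W$ ($r\ge1$), $C^{p,q}_0=\bigwedge^q\mathfrak g_p^*\otimes V$, elements $\omega(\Xi;Z)$. $\delta^{(r)}\omega(\xi_0,\dots,\xi_q;Z)=\sum_j(-1)^j(\rho^{(r)}(\hat t_p(\xi_j))\omega(\Xi(j);\cdot))(Z)+\sum_{m<n}(-1)^{m+n}\omega([\xi_m,\xi_n],\Xi(m,n);Z)$, $(\rho^{(r)}(y)\beta)(x_1,\dots,x_r)=\rho_0^1(y)\beta(x_1,\dots,x_r)-\sum_k\beta(x_1,\dots,\mathcal L_yx_k,\dots,x_r)$ ($r\ge1$),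 $\rho^{(0)}=\rho_0^0$. $\partial\omega(\Xi;Z)=\sum_{k=0}^{p+1}(-1)^k\omega(\partial_k\Xi;Z)$. $\delta_{(1)}:C^{p,q}_r\to C^{p,q}_{r+1}$: for $r=0$, $\delta_{(1)}\omega(\Xi;x)=\rho_1(x)\omega(\Xi)$; for $r\ge1$, $\delta_{(1)}\omega(\Xi;z_0,\dots,z_r)=\sum_k(-1)^k\rho_0^1(\mu(z_k))\omega(\Xi;Z(k))+\sum_{a<b}(-1)^{a+b}\omega(\Xi;[z_a,z_b],Z(a,b))$. $\Delta:C^{p,q}_r\to C^{p+1,q+1}_{r-1}$ ($r\ge1$): for $\Xi=(\xi_0,\dots,\xi_q)\in\mathfrak g_{p+1}^{q+1}$, $\xi_j=(x_j^0,\dots,x_j^p;y_j)$, $\Delta\omega(\Xi;Z)=\sum_j(-1)^j\omega(\partial_0\Xi(j);x_j^0,Z)$, composed with $\phi$ when $r=1$. *)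

theory Defs
  imports Complex_Main
begin

text \<open>All vector spaces are real vector spaces. Elements of g_p are pairs (xs, y) with
  xs a list of length p of elements of g and y in h.  Cochains in C^{p,q}_r (r >= 1) are
  functions of a list Xi of q elements of g_p and a list Z of r elements of g, with values in W.\<close>

definition lie_algebra :: "('a::real_vector \<Rightarrow> 'a \<Rightarrow> 'a) \<Rightarrow> bool" where
  "lie_algebra br \<longleftrightarrow> (\<forall>x. linear (br x)) \<and> (\<forall>y. linear (\<lambda>x. br x y)) \<and>
     (\<forall>x. br x x = 0) \<and> (\<forall>x y z. br x (br y z) + br y (br z x) + br z (br x y) = 0)"

definition lie_hom :: "('a::real_vector \<Rightarrow> 'a \<Rightarrow> 'a) \<Rightarrow> ('b::real_vector \<Rightarrow> 'b \<Rightarrow> 'b) \<Rightarrow> ('a \<Rightarrow> 'b) \<Rightarrow> bool" where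
  "lie_hom ba bb f \<longleftrightarrow> linear f \<and> (\<forall>x y. f (ba x y) = bb (f x) (f y))"

definition derivation :: "('a::real_vector \<Rightarrow> 'a \<Rightarrow> 'a) \<Rightarrow> ('a \<Rightarrow> 'a) \<Rightarrow> bool" where
  "derivation br D \<longleftrightarrow> linear D \<and> (\<forall>x y. D (br x y) = br (D x) y + br x (D y))"

text \<open>Crossed module: mu a Lie algebra morphism, L a Lie algebra morphism h -> Der(g),
  equivariance and Peiffer identity.\<close>
definition crossed_module ::
  "('g::real_vector \<Rightarrow> 'g \<Rightarrow> 'g) \<Rightarrow> ('h::real_vector \<Rightarrow> 'h \<Rightarrow> 'h) \<Rightarrow> ('g \<Rightarrow> 'h) \<Rightarrow> ('h \<Rightarrow> 'g \<Rightarrow> 'g) \<Rightarrow> bool" where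
  "crossed_module bg bh mu L \<longleftrightarrow> lie_algebra bg \<and> lie_algebra bh \<and> lie_hom bg bh mu \<and>
     (\<forall>x. linear (\<lambda>y. L y x)) \<and> (\<forall>y. derivation bg (L y)) \<and>
     (\<forall>y1 y2 x. L (bh y1 y2) x = L y1 (L y2 x) - L y2 (L y1 x)) \<and>
     (\<forall>y x. mu (L y x) = bh y (mu x)) \<and>
     (\<forall>x0 x1. L (mu x0) x1 = bg x0 x1)"

definition representation :: "('h::real_vector \<Rightarrow> 'h \<Rightarrow> 'h) \<Rightarrow> ('h \<Rightarrow> 'w::real_vector \<Rightarrow> 'w) \<Rightarrow> bool" where
  "representation bh rho \<longleftrightarrow> (\<forall>y. linear (rho y)) \<and> (\<forall>w. linear (\<lambda>y. rho y w)) \<and>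
     (\<forall>y1 y2 w. rho (bh y1 y2) w = rho y1 (rho y2 w) - rho y2 (rho y1 w))"

definition two_rep ::
  "('g::real_vector \<Rightarrow> 'g \<Rightarrow> 'g) \<Rightarrow> ('h::real_vector \<Rightarrow> 'h \<Rightarrow> 'h) \<Rightarrow> ('g \<Rightarrow> 'h) \<Rightarrow> ('h \<Rightarrow> 'g \<Rightarrow> 'g) \<Rightarrow>
   ('w::real_vector \<Rightarrow> 'v::real_vector) \<Rightarrow> ('h \<Rightarrow> 'w \<Rightarrow> 'w) \<Rightarrow> ('h \<Rightarrow> 'v \<Rightarrow> 'v) \<Rightarrow> ('g \<Rightarrow> 'v \<Rightarrow> 'w) \<Rightarrow> bool" where
  "two_rep bg bh mu L phi rho01 rho00 rho1 \<longleftrightarrow>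
     linear phi \<and> representation bh rho01 \<and> representation bh rho00 \<and>
     (\<forall>x. linear (rho1 x)) \<and> (\<forall>v. linear (\<lambda>x. rho1 x v)) \<and>
     (\<forall>y w. phi (rho01 y w) = rho00 y (phi w)) \<and>
     (\<forall>x0 x1 v. rho1 (bg x0 x1) v = rho1 x0 (phi (rho1 x1 v)) - rho1 x1 (phi (rho1 x0 v))) \<and>
     (\<forall>x v. rho00 (mu x) v = phi (rho1 x v)) \<and>
     (\<forall>x w. rho01 (mu x) w = rho1 x (phi w)) \<and>
     (\<forall>y x v. rho1 (L y x) v = rho01 y (rho1 x v) - rho1 x (rho00 y v))"

subsection \<open>The Lie algebras g_p\<close>

definition gp_dom :: "nat \<Rightarrow> ('g list \<times> 'h) \<Rightarrow> bool" where
  "gp_dom p \<xi> \<longleftrightarrow> length (fst \<xi>) = p"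

definition gp_add :: "('g::real_vector list \<times> 'h::real_vector) \<Rightarrow> ('g list \<times> 'h) \<Rightarrow> ('g list \<times> 'h)" where
  "gp_add a b = (map (\<lambda>(u, v). u + v) (zip (fst a) (fst b)), snd a + snd b)"

definition gp_scale :: "real \<Rightarrow> ('g::real_vector list \<times> 'h::real_vector) \<Rightarrow> ('g list \<times> 'h)" where
  "gp_scale c a = (map (\<lambda>u. c *\<^sub>R u) (fst a), c *\<^sub>R snd a)"

text \<open>h-component of the j-th arrow of the composable string: y + sum_{k>j} mu(x^k).\<close>
definition tgt_h :: "('g \<Rightarrow> 'h::monoid_add) \<Rightarrow> ('g list \<times> 'h) \<Rightarrow> nat \<Rightarrow> 'h" where
  "tgt_h mu \<xi> j = snd \<xi> + sum_list (map mu (drop (Suc j) (fst \<xi>)))"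

text \<open>Bracket on g_p, componentwise bracket of g semidirect h on composable strings.\<close>
definition gp_bracket ::
  "('g::real_vector \<Rightarrow> 'g \<Rightarrow> 'g) \<Rightarrow> ('h::real_vector \<Rightarrow> 'h \<Rightarrow> 'h) \<Rightarrow> ('g \<Rightarrow> 'h) \<Rightarrow> ('h \<Rightarrow> 'g \<Rightarrow> 'g) \<Rightarrow>
   ('g list \<times> 'h) \<Rightarrow> ('g list \<times> 'h) \<Rightarrow> ('g list \<times> 'h)" where
  "gp_bracket bg bh mu L a b =
     (map (\<lambda>j. bg (fst a ! j) (fst b ! j) + L (tgt_h mu a j) (fst b ! j) - L (tgt_h mu b j) (fst a ! j))
          [0..<length (fst a)],
      bh (snd a) (snd b))"

definition t_hat :: "('g \<Rightarrow> 'h::monoid_add) \<Rightarrow> ('g list \<times> 'h) \<Rightarrow> 'h" where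
  "t_hat mu \<xi> = snd \<xi> + sum_list (map mu (fst \<xi>))"

text \<open>Face maps g_{p+1} -> g_p, for an element whose list has length p+1.\<close>
definition face :: "('g::real_vector \<Rightarrow> 'h::real_vector) \<Rightarrow> nat \<Rightarrow> ('g list \<times> 'h) \<Rightarrow> ('g list \<times> 'h)" where
  "face mu k \<xi> =
     (if k = 0 then (tl (fst \<xi>), snd \<xi>)
      else if k < length (fst \<xi>) then
        (take (k - 1) (fst \<xi>) @ [fst \<xi> ! (k - 1) + fst \<xi> ! k] @ drop (Suc k) (fst \<xi>), snd \<xi>)
      else (butlast (fst \<xi>), snd \<xi> + mu (last (fst \<xi>))))"

text \<open>Removal of entries: X(j) and X(m,n) (m < n).\<close>
definition rem1 :: "nat \<Rightarrow> 'a list \<Rightarrow> 'a list" where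
  "rem1 j xs = take j xs @ drop (Suc j) xs"

definition rem2 :: "nat \<Rightarrow> nat \<Rightarrow> 'a list \<Rightarrow> 'a list" where
  "rem2 m n xs = rem1 m (rem1 n xs)"

subsection \<open>Cochains\<close>

definition alt_multilinear ::
  "('a \<Rightarrow> bool) \<Rightarrow> ('a \<Rightarrow> 'a \<Rightarrow> 'a) \<Rightarrow> (real \<Rightarrow> 'a \<Rightarrow> 'a) \<Rightarrow> nat \<Rightarrow> ('a list \<Rightarrow> 'b::real_vector) \<Rightarrow> bool" where
  "alt_multilinear D add sc n f \<longleftrightarrow>
     (\<forall>xs i a b c. length xs = n \<and> (\<forall>x\<in>set xs. D x) \<and> i < n \<and> D a \<and> D b \<longrightarrow>
        f (xs[i := add a b]) = f (xs[i := a]) + f (xs[i := b]) \<and>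
        f (xs[i := sc c a]) = c *\<^sub>R f (xs[i := a])) \<and>
     (\<forall>xs i j. length xs = n \<and> (\<forall>x\<in>set xs. D x) \<and> i < j \<and> j < n \<and> xs ! i = xs ! j \<longrightarrow> f xs = 0)"

text \<open>omega in C^{p,q}_r = Alt^q g_p^* (x) Alt^r g^* (x) W, for r >= 1.\<close>
definition cochain :: "nat \<Rightarrow> nat \<Rightarrow> nat \<Rightarrow> (('g::real_vector list \<times> 'h::real_vector) list \<Rightarrow> 'g list \<Rightarrow> 'w::real_vector) \<Rightarrow> bool" where
  "cochain p q r \<omega> \<longleftrightarrow>
     (\<forall>Z. length Z = r \<longrightarrow> alt_multilinear (gp_dom p) gp_add gp_scale q (\<lambda>\<Xi>. \<omega> \<Xi> Z)) \<and>
     (\<forall>\<Xi>. length \<Xi> = q \<and> (\<forall>\<xi>\<in>set \<Xi>. gp_dom p \<xi>) \<longrightarrow>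
        alt_multilinear (\<lambda>_. True) (+) (*\<^sub>R) r (\<omega> \<Xi>))"

subsection \<open>Operators\<close>

definition rho_r :: "('h \<Rightarrow> 'w \<Rightarrow> 'w::real_vector) \<Rightarrow> ('h \<Rightarrow> 'g \<Rightarrow> 'g) \<Rightarrow> 'h \<Rightarrow> ('g list \<Rightarrow> 'w) \<Rightarrow> 'g list \<Rightarrow> 'w" where
  "rho_r rho01 L y \<beta> Z = rho01 y (\<beta> Z) - (\<Sum>k<length Z. \<beta> (Z[k := L y (Z ! k)]))"

definition delta_r ::
  "('g::real_vector \<Rightarrow> 'g \<Rightarrow> 'g) \<Rightarrow> ('h::real_vector \<Rightarrow> 'h \<Rightarrow> 'h) \<Rightarrow> ('g \<Rightarrow> 'h) \<Rightarrow> ('h \<Rightarrow> 'g \<Rightarrow> 'g) \<Rightarrow>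
   ('h \<Rightarrow> 'w \<Rightarrow> 'w::real_vector) \<Rightarrow> (('g list \<times> 'h) list \<Rightarrow> 'g list \<Rightarrow> 'w) \<Rightarrow> (('g list \<times> 'h) list \<Rightarrow> 'g list \<Rightarrow> 'w)" where
  "delta_r bg bh mu L rho01 \<omega> \<Xi> Z =
     (\<Sum>j<length \<Xi>. (-1::real) ^ j *\<^sub>R rho_r rho01 L (t_hat mu (\<Xi> ! j)) (\<omega> (rem1 j \<Xi>)) Z) +
     (\<Sum>n<length \<Xi>. \<Sum>m<n. (-1::real) ^ (m + n) *\<^sub>R
        \<omega> (gp_bracket bg bh mu L (\<Xi> ! m) (\<Xi> ! n) # rem2 m n \<Xi>) Z)"

text \<open>Simplicial differential C^{p,q}_r -> C^{p+1,q}_r.\<close>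
definition pd :: "('g::real_vector \<Rightarrow> 'h::real_vector) \<Rightarrow> nat \<Rightarrow> (('g list \<times> 'h) list \<Rightarrow> 'g list \<Rightarrow> 'w::real_vector) \<Rightarrow>
   (('g list \<times> 'h) list \<Rightarrow> 'g list \<Rightarrow> 'w)" where
  "pd mu p \<omega> \<Xi> Z = (\<Sum>k\<le>Suc p. (-1::real) ^ k *\<^sub>R \<omega> (map (face mu k) \<Xi>) Z)"

text \<open>delta_(1) on C_0 (V-valued) and on C_r, r >= 1 (W-valued).\<close>
definition delta1_0 :: "('g \<Rightarrow> 'v \<Rightarrow> 'w) \<Rightarrow> (('g list \<times> 'h) list \<Rightarrow> 'v) \<Rightarrow> (('g list \<times> 'h) list \<Rightarrow> 'g list \<Rightarrow> 'w)" where
  "delta1_0 rho1 \<nu> \<Xi> Z = rho1 (hd Z) (\<nu> \<Xi>)"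

definition delta1 :: "('g \<Rightarrow> 'g \<Rightarrow> 'g) \<Rightarrow> ('g \<Rightarrow> 'h) \<Rightarrow> ('h \<Rightarrow> 'w \<Rightarrow> 'w::real_vector) \<Rightarrow>
   (('g list \<times> 'h) list \<Rightarrow> 'g list \<Rightarrow> 'w) \<Rightarrow> (('g list \<times> 'h) list \<Rightarrow> 'g list \<Rightarrow> 'w)" where
  "delta1 bg mu rho01 \<omega> \<Xi> Z =
     (\<Sum>k<length Z. (-1::real) ^ k *\<^sub>R rho01 (mu (Z ! k)) (\<omega> \<Xi> (rem1 k Z))) +
     (\<Sum>b<length Z. \<Sum>a<b. (-1::real) ^ (a + b) *\<^sub>R \<omega> \<Xi> (bg (Z ! a) (Z ! b) # rem2 a b Z))"

text \<open>Delta : C^{p,q}_r -> C^{p+1,q+1}_{r-1}; for r >= 2 (W-valued result) and for r = 1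
  (composed with phi, V-valued result).\<close>
definition Delta :: "('g::real_vector \<Rightarrow> 'h::real_vector) \<Rightarrow> (('g list \<times> 'h) list \<Rightarrow> 'g list \<Rightarrow> 'w::real_vector) \<Rightarrow>
   (('g list \<times> 'h) list \<Rightarrow> 'g list \<Rightarrow> 'w)" where
  "Delta mu \<omega> \<Xi> Z = (\<Sum>j<length \<Xi>. (-1::real) ^ j *\<^sub>R \<omega> (map (face mu 0) (rem1 j \<Xi>)) (hd (fst (\<Xi> ! j)) # Z))"

definition Delta_1 :: "('g::real_vector \<Rightarrow> 'h::real_vector) \<Rightarrow> ('w::real_vector \<Rightarrow> 'v::real_vector) \<Rightarrow>
   (('g list \<times> 'h) list \<Rightarrow> 'g list \<Rightarrow> 'w) \<Rightarrow> (('g list \<times> 'h) list \<Rightarrow> 'v)" where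
  "Delta_1 mu phi \<omega> \<Xi> = (\<Sum>j<length \<Xi>. (-1::real) ^ j *\<^sub>R phi (\<omega> (map (face mu 0) (rem1 j \<Xi>)) [hd (fst (\<Xi> ! j))]))"

end

theory Submission
  imports Defs
begin


lemma lie_facts:
  assumes "lie_algebra br"
  shows "br (a + b) c = br a c + br b c" "br a (b + c) = br a b + br a c"
    "br (a - b) c = br a c - br b c" "br a (b - c) = br a b - br a c"
    "br a b = - br b a"
proof -
  have l1: "linear (br x)" and l2: "linear (\<lambda>x. br x y)" and z: "br x x = 0" for x y
    using assms unfolding lie_algebra_def by auto
  show 1: "br (a + b) c = br a c + br b c" using linear_add[OF l2[of c]] by simp
  show 2: "br a (b + c) = br a b + br a c" using linear_add[OF l1[of a]] by simp
  show "br (a - b) c = br a c - br b c" using linear_diff[OF l2[of c]] by simp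
  show "br a (b - c) = br a b - br a c" using linear_diff[OF l1[of a]] by simp
  have "0 = br (a + b) (a + b)" using z by simp
  also have "\<dots> = br a b + br b a"
    using linear_add[OF l2[of "a+b"], of a b] linear_add[OF l1[of a], of a b] linear_add[OF l1[of b], of a b] z
    by simp
  finally show "br a b = - br b a" by (simp add: eq_neg_iff_add_eq_0)
qed

context
  fixes bg :: "'g::real_vector \<Rightarrow> 'g \<Rightarrow> 'g" and bh :: "'h::real_vector \<Rightarrow> 'h \<Rightarrow> 'h"
    and mu :: "'g \<Rightarrow> 'h" and L :: "'h \<Rightarrow> 'g \<Rightarrow> 'g"
  assumes CM: "crossed_module bg bh mu L"
begin

lemma lie_bg: "lie_algebra bg" using CM unfolding crossed_module_def by auto
lemma lie_bh: "lie_algebra bh" using CM unfolding crossed_module_def by auto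
lemmas bg_facts = lie_facts[OF lie_bg]
lemmas bh_facts = lie_facts[OF lie_bh]


lemma mu_lin: "linear mu" using CM unfolding crossed_module_def lie_hom_def by auto
lemma mu_add: "mu (a + b) = mu a + mu b" using linear_add[OF mu_lin] .
lemma mu_diff: "mu (a - b) = mu a - mu b" using linear_diff[OF mu_lin] .
lemma mu_bg: "mu (bg a b) = bh (mu a) (mu b)" using CM unfolding crossed_module_def lie_hom_def by auto
lemma L_lin1: "linear (\<lambda>y. L y x)" using CM unfolding crossed_module_def by auto
lemma L_lin2: "linear (L y)" using CM unfolding crossed_module_def derivation_def by auto
lemma L_add1: "L (a + b) x = L a x + L b x" using linear_add[OF L_lin1[of x]] by simp
lemma L_diff1: "L (a - b) x = L a x - L b x" using linear_diff[OF L_lin1[of x]] by simp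
lemma L_add2: "L y (a + b) = L y a + L y b" using linear_add[OF L_lin2[of y]] by simp
lemma mu_L: "mu (L y x) = bh y (mu x)" using CM unfolding crossed_module_def by auto
lemma L_mu: "L (mu a) b = bg a b" using CM unfolding crossed_module_def by auto

end



lemma split2: "0 < k \<Longrightarrow> k < length xs \<Longrightarrow> xs = take (k-1) xs @ xs!(k-1) # xs!k # drop (Suc k) xs"
proof -
  assume a: "0 < k" "k < length xs"
  have "xs = take (k-1) xs @ drop (k-1) xs" by simp
  moreover have "drop (k-1) xs = xs!(k-1) # drop k xs"
    using a Cons_nth_drop_Suc[of "k-1" xs] by simp
  moreover have "drop k xs = xs!k # drop (Suc k) xs"
    using a Cons_nth_drop_Suc[of k xs] by simp
  ultimately show ?thesis by (metis append_take_drop_id)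
qed

lemma face_0: "face mu 0 (x # xs, y) = (xs, y)" by (simp add: face_def)

lemma face_mid: "face mu (Suc (length pre)) (pre @ a # b # post, y) = (pre @ (a + b) # post, y)"
  by (simp add: face_def nth_append)

lemma face_last: "face mu (Suc (length pre)) (pre @ [x], y) = (pre, y + mu x)"
  by (simp add: face_def)

lemma bracket_Nil: "fst (gp_bracket bg bh mu L ([], y) ([], y')) = []"
  by (simp add: gp_bracket_def)

lemma bracket_Cons: "length xs = length xs' \<Longrightarrow>
  fst (gp_bracket bg bh mu L (x # xs, y) (x' # xs', y')) =
    (bg x x' + L (y + sum_list (map mu xs)) x' - L (y' + sum_list (map mu xs')) x)
    # fst (gp_bracket bg bh mu L (xs, y) (xs', y'))"
  by (simp add: gp_bracket_def tgt_h_def upt_conv_Cons map_Suc_upt[symmetric] del: upt_Suc)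

lemma bracket_snd: "snd (gp_bracket bg bh mu L (xs, y) (xs', y')) = bh y y'"
  by (simp add: gp_bracket_def)

lemma bracket_append: "length pre = length pre' \<Longrightarrow> length R = length R' \<Longrightarrow>
  fst (gp_bracket bg bh mu L (pre @ R, y) (pre' @ R', y')) =
    fst (gp_bracket bg bh mu L (pre, y + sum_list (map mu R)) (pre', y' + sum_list (map mu R')))
    @ fst (gp_bracket bg bh mu L (R, y) (R', y'))"
proof (induction pre arbitrary: pre')
  case Nil
  then show ?case by (simp add: bracket_Nil)
next
  case (Cons a pre)
  then obtain a' pr' where p': "pre' = a' # pr'" "length pr' = length pre" by (cases pre') auto
  show ?case using Cons p' by (simp add: bracket_Cons add_ac)
qed

lemma bracket_length: "length (fst (gp_bracket bg bh mu L a b)) = length (fst a)"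
  by (simp add: gp_bracket_def)

context
  fixes bg :: "'g::real_vector \<Rightarrow> 'g \<Rightarrow> 'g" and bh :: "'h::real_vector \<Rightarrow> 'h \<Rightarrow> 'h"
    and mu :: "'g \<Rightarrow> 'h" and L :: "'h \<Rightarrow> 'g \<Rightarrow> 'g"
  assumes CM: "crossed_module bg bh mu L"
begin

lemma peiffer_merge:
  "bg (a + b) (a' + b') + L t (a' + b') - L t' (a + b) =
   (bg a a' + L (t + mu b) a' - L (t' + mu b') a) + (bg b b' + L t b' - L t' b)"
proof -
  have "L (t + mu b) a' = L t a' + bg b a'" by (simp add: L_add1[OF CM] L_mu[OF CM])
  moreover have "L (t' + mu b') a = L t' a + bg b' a" by (simp add: L_add1[OF CM] L_mu[OF CM])
  moreover have "L t (a' + b') = L t a' + L t b'" by (simp add: L_add2[OF CM])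
  moreover have "L t' (a + b) = L t' a + L t' b" by (simp add: L_add2[OF CM])
  moreover have "bg (a + b) (a' + b') = bg a a' + bg a b' + bg b a' + bg b b'"
    by (simp add: bg_facts(1,2)[OF CM])
  moreover have "bg a b' = - bg b' a" by (rule bg_facts(5)[OF CM])
  ultimately show ?thesis by (simp add: algebra_simps)
qed

lemma face_bracket:
  assumes la: "length (fst a) = Suc p" and lb: "length (fst b) = Suc p" and k: "k \<le> Suc p"
  shows "face mu k (gp_bracket bg bh mu L a b) = gp_bracket bg bh mu L (face mu k a) (face mu k b)"
proof -
  obtain xs y where a: "a = (xs, y)" by (cases a)
  obtain xs' y' where b: "b = (xs', y')" by (cases b)
  have lx: "length xs = Suc p" and lx': "length xs' = Suc p" using la lb a b by auto
  show ?thesis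
  proof (cases "k = 0")
    case True
    obtain x0 xs0 where "xs = x0 # xs0" using lx by (cases xs) auto
    moreover obtain x0' xs0' where "xs' = x0' # xs0'" using lx' by (cases xs') auto
    ultimately show ?thesis using True a b lx lx'
      by (simp add: face_def bracket_Cons bracket_snd gp_bracket_def[of bg bh mu L "(xs0, y)"])
  next
    case False
    show ?thesis
    proof (cases "k < Suc p")
      case True
      let ?pre = "take (k-1) xs" and ?pre' = "take (k-1) xs'"
      let ?post = "drop (Suc k) xs" and ?post' = "drop (Suc k) xs'"
      have sx: "xs = ?pre @ xs!(k-1) # xs!k # ?post" using split2[of k xs] True False lx by simp
      have sx': "xs' = ?pre' @ xs'!(k-1) # xs'!k # ?post'" using split2[of k xs'] True False lx' by simp
      have kk: "k = Suc (length ?pre)" "k = Suc (length ?pre')" using True False lx lx' by auto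
      have lp: "length ?pre = length ?pre'" "length ?post = length ?post'" using lx lx' by auto
      have br: "fst (gp_bracket bg bh mu L (xs, y) (xs', y')) =
         fst (gp_bracket bg bh mu L (?pre, y + sum_list (map mu (xs!(k-1) # xs!k # ?post)))
                                    (?pre', y' + sum_list (map mu (xs'!(k-1) # xs'!k # ?post'))))
         @ (bg (xs!(k-1)) (xs'!(k-1)) + L (y + sum_list (map mu (xs!k # ?post))) (xs'!(k-1))
              - L (y' + sum_list (map mu (xs'!k # ?post'))) (xs!(k-1)))
         # (bg (xs!k) (xs'!k) + L (y + sum_list (map mu ?post)) (xs'!k)
              - L (y' + sum_list (map mu ?post')) (xs!k))
         # fst (gp_bracket bg bh mu L (?post, y) (?post', y'))"
        apply (subst sx, subst sx')
        apply (subst bracket_append)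
        using lp apply simp_all
        apply (subst bracket_Cons, simp)
        apply (subst bracket_Cons, simp)
        apply simp
        done
      have br2: "fst (gp_bracket bg bh mu L (?pre @ (xs!(k-1) + xs!k) # ?post, y) (?pre' @ (xs'!(k-1) + xs'!k) # ?post', y')) =
         fst (gp_bracket bg bh mu L (?pre, y + sum_list (map mu ((xs!(k-1) + xs!k) # ?post)))
                                    (?pre', y' + sum_list (map mu ((xs'!(k-1) + xs'!k) # ?post'))))
         @ (bg (xs!(k-1) + xs!k) (xs'!(k-1) + xs'!k) + L (y + sum_list (map mu ?post)) (xs'!(k-1) + xs'!k)
              - L (y' + sum_list (map mu ?post')) (xs!(k-1) + xs!k))
         # fst (gp_bracket bg bh mu L (?post, y) (?post', y'))"
        apply (subst bracket_append)
        using lp apply simp_all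
        apply (subst bracket_Cons, simp)
        apply simp
        done
      have fa: "face mu k (xs, y) = (?pre @ (xs!(k-1) + xs!k) # ?post, y)"
        using face_mid[of mu ?pre "xs!(k-1)" "xs!k" ?post y] sx kk by simp
      have fb: "face mu k (xs', y') = (?pre' @ (xs'!(k-1) + xs'!k) # ?post', y')"
        using face_mid[of mu ?pre' "xs'!(k-1)" "xs'!k" ?post' y'] sx' kk by simp
      have lbr: "length (fst (gp_bracket bg bh mu L (xs, y) (xs', y'))) = Suc p"
        using lx by (simp add: bracket_length)
      have fbr: "face mu k (gp_bracket bg bh mu L (xs, y) (xs', y')) =
          (fst (gp_bracket bg bh mu L (?pre, y + sum_list (map mu (xs!(k-1) # xs!k # ?post)))
                                    (?pre', y' + sum_list (map mu (xs'!(k-1) # xs'!k # ?post'))))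
           @ ((bg (xs!(k-1)) (xs'!(k-1)) + L (y + sum_list (map mu (xs!k # ?post))) (xs'!(k-1))
              - L (y' + sum_list (map mu (xs'!k # ?post'))) (xs!(k-1)))
            + (bg (xs!k) (xs'!k) + L (y + sum_list (map mu ?post)) (xs'!k)
              - L (y' + sum_list (map mu ?post')) (xs!k)))
         # fst (gp_bracket bg bh mu L (?post, y) (?post', y')), bh y y')"
        (is "_ = (?BR @ (?e1 + ?e2) # ?POST, _)")
      proof -
        have e: "gp_bracket bg bh mu L (xs, y) (xs', y') = (?BR @ ?e1 # ?e2 # ?POST, bh y y')"
          using br by (metis bracket_snd prod.collapse)
        have kb: "Suc (length ?BR) = k" using kk lp by (simp add: bracket_length)
        have "face mu (Suc (length ?BR)) (?BR @ ?e1 # ?e2 # ?POST, bh y y') = (?BR @ (?e1 + ?e2) # ?POST, bh y y')"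
          by (rule face_mid)
        then show ?thesis unfolding e kb .
      qed
      have s1: "sum_list (map mu ((xs!(k-1) + xs!k) # ?post)) = sum_list (map mu (xs!(k-1) # xs!k # ?post))"
        by (simp add: mu_add[OF CM] add.assoc)
      have s1': "sum_list (map mu ((xs'!(k-1) + xs'!k) # ?post')) = sum_list (map mu (xs'!(k-1) # xs'!k # ?post'))"
        by (simp add: mu_add[OF CM] add.assoc)
      have pm: "bg (xs!(k-1) + xs!k) (xs'!(k-1) + xs'!k) + L (y + sum_list (map mu ?post)) (xs'!(k-1) + xs'!k)
              - L (y' + sum_list (map mu ?post')) (xs!(k-1) + xs!k) =
          (bg (xs!(k-1)) (xs'!(k-1)) + L (y + sum_list (map mu (xs!k # ?post))) (xs'!(k-1))
              - L (y' + sum_list (map mu (xs'!k # ?post'))) (xs!(k-1)))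
            + (bg (xs!k) (xs'!k) + L (y + sum_list (map mu ?post)) (xs'!k)
              - L (y' + sum_list (map mu ?post')) (xs!k))"
        using peiffer_merge[of "xs!(k-1)" "xs!k" "xs'!(k-1)" "xs'!k" "y + sum_list (map mu ?post)" "y' + sum_list (map mu ?post')"]
        by (simp add: add_ac)
      show ?thesis
        unfolding a b fa fb fbr
        apply (rule prod_eqI)
         apply (simp only: fst_conv br2 s1 s1' pm)
        apply (simp add: bracket_snd)
        done
    next
      case False2: False
      then have kp: "k = Suc p" using k by simp
      have sx: "xs = butlast xs @ [last xs]" using lx by (metis append_butlast_last_id list.size(3) nat.distinct(1))
      have sx': "xs' = butlast xs' @ [last xs']" using lx' by (metis append_butlast_last_id list.size(3) nat.distinct(1))
      have kk: "k = Suc (length (butlast xs))" "k = Suc (length (butlast xs'))" using kp lx lx' by auto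
      have fa: "face mu k (xs, y) = (butlast xs, y + mu (last xs))"
        using face_last[of mu "butlast xs" "last xs" y] sx kk by simp
      have fb: "face mu k (xs', y') = (butlast xs', y' + mu (last xs'))"
        using face_last[of mu "butlast xs'" "last xs'" y'] sx' kk by simp
      have br: "fst (gp_bracket bg bh mu L (xs, y) (xs', y')) =
         fst (gp_bracket bg bh mu L (butlast xs, y + mu (last xs)) (butlast xs', y' + mu (last xs')))
         @ [bg (last xs) (last xs') + L y (last xs') - L y' (last xs)]"
        apply (subst sx, subst sx')
        apply (subst bracket_append)
        using lx lx' apply simp_all
        apply (subst bracket_Cons, simp)
        apply (simp add: bracket_Nil)
        done
      have fbr: "face mu k (gp_bracket bg bh mu L (xs, y) (xs', y')) =
         (fst (gp_bracket bg bh mu L (butlast xs, y + mu (last xs)) (butlast xs', y' + mu (last xs'))),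
          bh y y' + mu (bg (last xs) (last xs') + L y (last xs') - L y' (last xs)))"
        (is "_ = (?BR, bh y y' + mu ?e)")
      proof -
        have e: "gp_bracket bg bh mu L (xs, y) (xs', y') = (?BR @ [?e], bh y y')"
          using br by (metis bracket_snd prod.collapse)
        have kb: "Suc (length ?BR) = k" using kk lx lx' by (simp add: bracket_length)
        have "face mu (Suc (length ?BR)) (?BR @ [?e], bh y y') = (?BR, bh y y' + mu ?e)"
          by (rule face_last)
        then show ?thesis unfolding e kb .
      qed
      have "bh y y' + mu (bg (last xs) (last xs') + L y (last xs') - L y' (last xs)) =
            bh (y + mu (last xs)) (y' + mu (last xs'))"
        using bh_facts(5)[OF CM, of "mu (last xs)" y']
        by (simp add: mu_add[OF CM] mu_diff[OF CM] mu_bg[OF CM] mu_L[OF CM] bh_facts(1,2)[OF CM] algebra_simps)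
      then show ?thesis unfolding a b fa fb fbr by (simp add: gp_bracket_def[of _ _ _ _ "(butlast xs, _)"])
    qed
  qed
qed

end



lemma length_face:
  assumes "length (fst \<xi>) = Suc p" "k \<le> Suc p"
  shows "length (fst (face mu k \<xi>)) = p"
  using assms by (auto simp: face_def)

lemma that_face0:
  assumes "length (fst \<xi>) = Suc p" "linear mu"
  shows "t_hat mu (face mu 0 \<xi>) = t_hat mu \<xi> - mu (hd (fst \<xi>))"
proof -
  obtain x xs y where "\<xi> = (x # xs, y)" using assms(1) by (cases \<xi>; cases "fst \<xi>") auto
  then show ?thesis by (simp add: t_hat_def face_def algebra_simps)
qed

lemma that_face:
  assumes "length (fst \<xi>) = Suc p" "k \<le> Suc p" "k \<noteq> 0" "linear mu"
  shows "t_hat mu (face mu k \<xi>) = t_hat mu \<xi>"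
proof -
  obtain xs y where a: "\<xi> = (xs, y)" by (cases \<xi>)
  have lx: "length xs = Suc p" using assms a by simp
  show ?thesis
  proof (cases "k < Suc p")
    case True
    have sx: "xs = take (k-1) xs @ xs!(k-1) # xs!k # drop (Suc k) xs" using split2[of k xs] True assms lx by simp
    have kk: "k = Suc (length (take (k-1) xs))" using True assms lx by auto
    have "face mu k (xs, y) = (take (k-1) xs @ (xs!(k-1) + xs!k) # drop (Suc k) xs, y)"
      using face_mid[of mu "take (k-1) xs" "xs!(k-1)" "xs!k" "drop (Suc k) xs" y] sx kk by simp
    moreover have "t_hat mu (xs, y) = y + sum_list (map mu (take (k-1) xs)) + mu (xs!(k-1)) + mu (xs!k) + sum_list (map mu (drop (Suc k) xs))"
      by (subst sx) (simp add: t_hat_def add_ac)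
    ultimately show ?thesis unfolding a by (simp add: t_hat_def linear_add[OF assms(4)] add_ac)
  next
    case False
    have sx: "xs = butlast xs @ [last xs]" using lx by (metis append_butlast_last_id list.size(3) nat.distinct(1))
    have kk: "k = Suc (length (butlast xs))" using False assms lx by auto
    have "face mu k (xs, y) = (butlast xs, y + mu (last xs))"
      using face_last[of mu "butlast xs" "last xs" y] sx kk by simp
    moreover have "t_hat mu (xs, y) = y + sum_list (map mu (butlast xs)) + mu (last xs)"
      by (subst sx) (simp add: t_hat_def add_ac)
    ultimately show ?thesis unfolding a by (simp add: t_hat_def add_ac)
  qed
qed

lemma rem1_map: "rem1 j (map f xs) = map f (rem1 j xs)"
  by (simp add: rem1_def take_map drop_map)

lemma rem2_map: "rem2 m n (map f xs) = map f (rem2 m n xs)"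
  by (simp add: rem2_def rem1_map)

lemma length_rem1: "j < length xs \<Longrightarrow> length (rem1 j xs) = length xs - 1"
  by (simp add: rem1_def)

lemma length_rem2: "m < n \<Longrightarrow> n < length xs \<Longrightarrow> length (rem2 m n xs) = length xs - 2"
  by (simp add: rem2_def length_rem1)

lemma set_rem1: "set (rem1 j xs) \<subseteq> set xs"
  unfolding rem1_def using set_take_subset set_drop_subset by fastforce

lemma rem1_Cons0: "rem1 0 (x # xs) = xs" by (simp add: rem1_def)
lemma rem1_ConsS: "rem1 (Suc k) (x # xs) = x # rem1 k xs" by (simp add: rem1_def)
lemma rem2_Cons0: "rem2 0 (Suc b) (x # xs) = rem1 b xs" by (simp add: rem2_def rem1_def)
lemma rem2_ConsS: "rem2 (Suc a) (Suc b) (x # xs) = x # rem2 a b xs" by (simp add: rem2_def rem1_def)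

section \<open>Alternating multilinear maps\<close>

context
  fixes f :: "'g::real_vector list \<Rightarrow> 'w::real_vector" and n :: nat
  assumes am: "alt_multilinear (\<lambda>_. True) (+) (*\<^sub>R) n f"
begin

lemma am_add: "length xs = n \<Longrightarrow> i < n \<Longrightarrow> f (xs[i := a + b]) = f (xs[i := a]) + f (xs[i := b])"
  using am unfolding alt_multilinear_def by blast

lemma am_diff: "length xs = n \<Longrightarrow> i < n \<Longrightarrow> f (xs[i := a - b]) = f (xs[i := a]) - f (xs[i := b])"
  using am_add[of xs i "a - b" b] by (simp add: algebra_simps)

lemma am_eq0: "length xs = n \<Longrightarrow> i < j \<Longrightarrow> j < n \<Longrightarrow> xs ! i = xs ! j \<Longrightarrow> f xs = 0"
  using am unfolding alt_multilinear_def by blast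

lemma am_swap:
  assumes l: "length (pre @ a # b # post) = n"
  shows "f (pre @ a # b # post) = - f (pre @ b # a # post)"
proof -
  let ?i = "length pre"
  have i1: "?i < n" "Suc ?i < n" using l by auto
  have upd: "(pre @ u # v # post)[?i := w] = pre @ w # v # post"
     "(pre @ u # v # post)[Suc ?i := w] = pre @ u # w # post" for u v w
    by (simp_all add: list_update_append)
  have z: "f (pre @ u # u # post) = 0" for u
    using am_eq0[of "pre @ u # u # post" ?i "Suc ?i"] l by (simp add: nth_append)
  have s1: "f (pre @ (a + b) # (a + b) # post) = f (pre @ a # (a + b) # post) + f (pre @ b # (a + b) # post)"
    using am_add[of "pre @ a # (a + b) # post" ?i a b] l i1 by (simp add: upd)
  have s2: "f (pre @ u # (a + b) # post) = f (pre @ u # a # post) + f (pre @ u # b # post)" for u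
    using am_add[of "pre @ u # a # post" "Suc ?i" a b] l i1 by (simp add: upd)
  have "0 = f (pre @ a # b # post) + f (pre @ b # a # post)"
    using s1 s2[of a] s2[of b] z[of a] z[of b] z[of "a + b"] by simp
  then show ?thesis by (simp add: eq_neg_iff_add_eq_0)
qed

lemma am_move:
  "length (pre @ w # post) = n \<Longrightarrow> f (pre @ w # post) = (-1::real) ^ length pre *\<^sub>R f (w # pre @ post)"
proof (induction pre arbitrary: post rule: rev_induct)
  case Nil
  then show ?case by simp
next
  case (snoc c pre)
  have "f ((pre @ [c]) @ w # post) = f (pre @ c # w # post)" by simp
  also have "\<dots> = - f (pre @ w # c # post)" using am_swap[of pre c w post] snoc.prems by simp
  also have "\<dots> = - ((-1::real) ^ length pre *\<^sub>R f (w # pre @ c # post))"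
    using snoc.IH[of "c # post"] snoc.prems by simp
  finally show ?case by simp
qed

end




lemma rho_r_pd:
  assumes "linear (rho01 y)"
  shows "rho_r rho01 L y (pd mu p \<omega> X) Z =
    (\<Sum>k\<le>Suc p. (-1::real) ^ k *\<^sub>R rho_r rho01 L y (\<omega> (map (face mu k) X)) Z)"
  unfolding rho_r_def pd_def
  by (simp add: linear_sum[OF assms] linear_cmul[OF assms] scaleR_right_diff_distrib sum_subtractf
      scaleR_right.sum sum.swap[of _ "{..Suc p}"] del: sum.atMost_Suc)

lemma rho_r_diff_y:
  assumes CM: "crossed_module bg bh mu L"
    and R: "\<And>w. linear (\<lambda>y. rho01 y w)"
    and am: "alt_multilinear (\<lambda>_. True) (+) (*\<^sub>R) (length Z) \<beta>"
  shows "rho_r rho01 L y \<beta> Z - rho_r rho01 L (y - d) \<beta> Z = rho_r rho01 L d \<beta> Z"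
proof -
  have "\<beta> (Z[k := L (y - d) (Z ! k)]) = \<beta> (Z[k := L y (Z ! k)]) - \<beta> (Z[k := L d (Z ! k)])"
    if "k < length Z" for k
    using am_diff[OF am, of Z k] that by (simp add: L_diff1[OF CM])
  then have s: "(\<Sum>k<length Z. \<beta> (Z[k := L (y - d) (Z ! k)])) =
     (\<Sum>k<length Z. \<beta> (Z[k := L y (Z ! k)])) - (\<Sum>k<length Z. \<beta> (Z[k := L d (Z ! k)]))"
    by (simp add: sum_subtractf)
  have "rho01 (y - d) (\<beta> Z) = rho01 y (\<beta> Z) - rho01 d (\<beta> Z)"
    using linear_diff[OF R[of "\<beta> Z"]] by simp
  then show ?thesis unfolding rho_r_def s by (simp add: algebra_simps)
qed

lemma perj:
  assumes CM: "crossed_module bg bh mu L"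
    and am: "alt_multilinear (\<lambda>_. True) (+) (*\<^sub>R) r (\<omega> X)"
    and lZ: "length Z = r"
  shows "rho_r rho01 L (mu x) (\<omega> X) Z =
    ((\<Sum>k<r. (-1::real) ^ k *\<^sub>R rho01 (mu (Z ! k)) (\<omega> X (x # rem1 k Z))) +
     (\<Sum>b<r. \<Sum>a<b. (-1::real) ^ (a + b) *\<^sub>R \<omega> X (x # bg (Z ! a) (Z ! b) # rem2 a b Z)))
    + delta1 bg mu rho01 \<omega> X (x # Z)"
proof -
  let ?O = "\<omega> X"
  have mv: "?O (Z[k := bg x (Z ! k)]) = (-1::real) ^ k *\<^sub>R ?O (bg x (Z ! k) # rem1 k Z)" if "k < r" for k
  proof -
    have "Z[k := bg x (Z ! k)] = take k Z @ bg x (Z ! k) # drop (Suc k) Z"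
      using that lZ by (simp add: upd_conv_take_nth_drop)
    then show ?thesis using am_move[OF am, of "take k Z" "bg x (Z ! k)" "drop (Suc k) Z"] that lZ
      by (simp add: rem1_def min_def)
  qed
  have sw: "?O (bg (Z ! a) (Z ! b) # x # rem2 a b Z) = - ?O (x # bg (Z ! a) (Z ! b) # rem2 a b Z)"
    if "a < b" "b < r" for a b
    using am_swap[OF am, of "[]" "bg (Z ! a) (Z ! b)" x "rem2 a b Z"] that lZ
    by (simp add: length_rem2)
  have lhs: "rho_r rho01 L (mu x) ?O Z = rho01 (mu x) (?O Z) - (\<Sum>k<r. (-1::real) ^ k *\<^sub>R ?O (bg x (Z ! k) # rem1 k Z))"
    unfolding rho_r_def using mv lZ by (simp add: L_mu[OF CM])
  have d1: "(\<Sum>k<length (x # Z). (-1::real) ^ k *\<^sub>R rho01 (mu ((x # Z) ! k)) (?O (rem1 k (x # Z)))) =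
     rho01 (mu x) (?O Z) - (\<Sum>k<r. (-1::real) ^ k *\<^sub>R rho01 (mu (Z ! k)) (?O (x # rem1 k Z)))"
    using lZ by (simp add: sum.lessThan_Suc_shift rem1_Cons0 rem1_ConsS sum_negf del: sum.lessThan_Suc)
  have d2: "(\<Sum>b<length (x # Z). \<Sum>a<b. (-1::real) ^ (a + b) *\<^sub>R ?O (bg ((x # Z) ! a) ((x # Z) ! b) # rem2 a b (x # Z))) =
     (\<Sum>b<r. (\<Sum>a<Suc b. (-1::real) ^ (a + Suc b) *\<^sub>R ?O (bg ((x # Z) ! a) ((x # Z) ! Suc b) # rem2 a (Suc b) (x # Z))))"
    using lZ by (simp add: sum.lessThan_Suc_shift del: sum.lessThan_Suc)
  also have "\<dots> = (\<Sum>b<r. (-1::real) ^ Suc b *\<^sub>R ?O (bg x (Z ! b) # rem1 b Z) +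
      (\<Sum>a<b. (-1::real) ^ (Suc a + Suc b) *\<^sub>R ?O (bg (Z ! a) (Z ! b) # x # rem2 a b Z)))"
    by (simp add: sum.lessThan_Suc_shift rem2_Cons0 rem2_ConsS del: sum.lessThan_Suc)
  also have "\<dots> = - (\<Sum>b<r. (-1::real) ^ b *\<^sub>R ?O (bg x (Z ! b) # rem1 b Z)) -
      (\<Sum>b<r. \<Sum>a<b. (-1::real) ^ (a + b) *\<^sub>R ?O (x # bg (Z ! a) (Z ! b) # rem2 a b Z))"
  proof -
    have "(\<Sum>a<b. (-1::real) ^ (Suc a + Suc b) *\<^sub>R ?O (bg (Z ! a) (Z ! b) # x # rem2 a b Z)) =
          - (\<Sum>a<b. (-1::real) ^ (a + b) *\<^sub>R ?O (x # bg (Z ! a) (Z ! b) # rem2 a b Z))" if "b < r" for b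
      using sw that by (simp add: sum_negf[symmetric])
    then have "(\<Sum>b<r. (-1::real) ^ Suc b *\<^sub>R ?O (bg x (Z ! b) # rem1 b Z) +
      (\<Sum>a<b. (-1::real) ^ (Suc a + Suc b) *\<^sub>R ?O (bg (Z ! a) (Z ! b) # x # rem2 a b Z))) =
      (\<Sum>b<r. - ((-1::real) ^ b *\<^sub>R ?O (bg x (Z ! b) # rem1 b Z)) -
      (\<Sum>a<b. (-1::real) ^ (a + b) *\<^sub>R ?O (x # bg (Z ! a) (Z ! b) # rem2 a b Z)))"
      by (intro sum.cong refl) simp
    then show ?thesis by (simp only: sum_subtractf sum_negf)
  qed
  finally have d2': "(\<Sum>b<length (x # Z). \<Sum>a<b. (-1::real) ^ (a + b) *\<^sub>R ?O (bg ((x # Z) ! a) ((x # Z) ! b) # rem2 a b (x # Z))) =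
    - (\<Sum>b<r. (-1::real) ^ b *\<^sub>R ?O (bg x (Z ! b) # rem1 b Z)) -
      (\<Sum>b<r. \<Sum>a<b. (-1::real) ^ (a + b) *\<^sub>R ?O (x # bg (Z ! a) (Z ! b) # rem2 a b Z))" .
  show ?thesis unfolding lhs delta1_def d1 d2' by (simp add: algebra_simps)
qed




theorem mainTheorem10:
  fixes bg :: "'g::real_vector \<Rightarrow> 'g \<Rightarrow> 'g" and bh :: "'h::real_vector \<Rightarrow> 'h \<Rightarrow> 'h"
    and mu :: "'g \<Rightarrow> 'h" and L :: "'h \<Rightarrow> 'g \<Rightarrow> 'g"
    and phi :: "'w::real_vector \<Rightarrow> 'v::real_vector"
    and rho01 :: "'h \<Rightarrow> 'w \<Rightarrow> 'w" and rho00 :: "'h \<Rightarrow> 'v \<Rightarrow> 'v" and rho1 :: "'g \<Rightarrow> 'v \<Rightarrow> 'w"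
    and \<omega> :: "('g list \<times> 'h) list \<Rightarrow> 'g list \<Rightarrow> 'w"
    and p q r :: nat and \<Xi> :: "('g list \<times> 'h) list" and Z :: "'g list"
  assumes "crossed_module bg bh mu L"
    and "two_rep bg bh mu L phi rho01 rho00 rho1"
    and "1 \<le> r"
    and "cochain p q r \<omega>"
    and "length \<Xi> = Suc q" and "\<forall>\<xi>\<in>set \<Xi>. length (fst \<xi>) = Suc p"
    and "length Z = r"
  shows "delta_r bg bh mu L rho01 (pd mu p \<omega>) \<Xi> Z - pd mu p (delta_r bg bh mu L rho01 \<omega>) \<Xi> Z =
         (if r = 1 then delta1_0 rho1 (Delta_1 mu phi \<omega>) \<Xi> Z
          else delta1 bg mu rho01 (Delta mu \<omega>) \<Xi> Z)
         + Delta mu (delta1 bg mu rho01 \<omega>) \<Xi> Z"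
proof -
  note CM = assms(1) and TR = assms(2)
  have rep: "representation bh rho01" using TR unfolding two_rep_def by (elim conjE) assumption
  have r1l: "\<forall>x. linear (rho1 x)" using TR unfolding two_rep_def by (elim conjE) assumption
  have r1p: "\<forall>x w. rho01 (mu x) w = rho1 x (phi w)" using TR unfolding two_rep_def by (elim conjE) assumption
  have R01: "linear (rho01 y)" for y using rep unfolding representation_def by (elim conjE allE) assumption
  have R01y: "linear (\<lambda>y. rho01 y w)" for w using rep unfolding representation_def by (elim conjE allE) assumption
  have R1: "linear (rho1 x)" for x using r1l by (elim allE) assumption
  have R1phi: "rho01 (mu x) w = rho1 x (phi w)" for x w using r1p by (elim allE) assumption
  have mul: "linear mu" by (rule mu_lin[OF CM])
  have lxi: "length (fst (\<Xi> ! j)) = Suc p" if "j < length \<Xi>" for j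
    using assms(6) that by auto
  let ?x = "\<lambda>j. hd (fst (\<Xi> ! j))"
  let ?O = "\<lambda>j. \<omega> (map (face mu 0) (rem1 j \<Xi>))"
  have amO: "alt_multilinear (\<lambda>_. True) (+) (*\<^sub>R) r (?O j)" if "j < length \<Xi>" for j
  proof -
    have l: "length (map (face mu 0) (rem1 j \<Xi>)) = q" using that assms(5) by (simp add: length_rem1)
    have gd: "\<forall>\<xi>\<in>set (map (face mu 0) (rem1 j \<Xi>)). gp_dom p \<xi>"
    proof
      fix \<xi> assume "\<xi> \<in> set (map (face mu 0) (rem1 j \<Xi>))"
      then have "\<xi> \<in> face mu 0 ` set (rem1 j \<Xi>)" by simp
      then obtain \<eta> where e1: "\<eta> \<in> set (rem1 j \<Xi>)" and e2: "\<xi> = face mu 0 \<eta>" by (rule imageE)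
      have "\<eta> \<in> set \<Xi>" using set_rem1 e1 by (rule subsetD)
      then have "length (fst \<eta>) = Suc p" using assms(6) by simp
      then show "gp_dom p \<xi>" using length_face[of \<eta> p 0] e2 unfolding gp_dom_def by simp
    qed
    have "\<forall>\<Xi>'. length \<Xi>' = q \<and> (\<forall>\<xi>\<in>set \<Xi>'. gp_dom p \<xi>) \<longrightarrow>
        alt_multilinear (\<lambda>_. True) (+) (*\<^sub>R) r (\<omega> \<Xi>')"
      using assms(4) unfolding cochain_def by (elim conjE) assumption
    then show ?thesis using l gd by (elim allE impE) (rule conjI)
  qed

  define A1 where "A1 = (\<Sum>j<length \<Xi>. (-1::real) ^ j *\<^sub>R (\<Sum>k\<le>Suc p. (-1::real) ^ k *\<^sub>R
      rho_r rho01 L (t_hat mu (\<Xi> ! j)) (\<omega> (map (face mu k) (rem1 j \<Xi>))) Z))"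
  define A2 where "A2 = (\<Sum>n<length \<Xi>. \<Sum>m<n. (-1::real) ^ (m + n) *\<^sub>R (\<Sum>k\<le>Suc p. (-1::real) ^ k *\<^sub>R
      \<omega> (map (face mu k) (gp_bracket bg bh mu L (\<Xi> ! m) (\<Xi> ! n) # rem2 m n \<Xi>)) Z))"
  define B1 where "B1 = (\<Sum>k\<le>Suc p. (-1::real) ^ k *\<^sub>R (\<Sum>j<length \<Xi>. (-1::real) ^ j *\<^sub>R
      rho_r rho01 L (t_hat mu (face mu k (\<Xi> ! j))) (\<omega> (map (face mu k) (rem1 j \<Xi>))) Z))"
  define B2 where "B2 = (\<Sum>k\<le>Suc p. (-1::real) ^ k *\<^sub>R (\<Sum>n<length \<Xi>. \<Sum>m<n. (-1::real) ^ (m + n) *\<^sub>R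
      \<omega> (gp_bracket bg bh mu L (face mu k (\<Xi> ! m)) (face mu k (\<Xi> ! n)) # map (face mu k) (rem2 m n \<Xi>)) Z))"

  have A: "delta_r bg bh mu L rho01 (pd mu p \<omega>) \<Xi> Z = A1 + A2"
    unfolding A1_def A2_def delta_r_def rho_r_pd[OF R01] by (simp only: pd_def)
  have B: "pd mu p (delta_r bg bh mu L rho01 \<omega>) \<Xi> Z = B1 + B2"
  proof -
    have "pd mu p (delta_r bg bh mu L rho01 \<omega>) \<Xi> Z =
      (\<Sum>k\<le>Suc p. (-1::real) ^ k *\<^sub>R ((\<Sum>j<length \<Xi>. (-1::real) ^ j *\<^sub>R
      rho_r rho01 L (t_hat mu (face mu k (\<Xi> ! j))) (\<omega> (map (face mu k) (rem1 j \<Xi>))) Z) +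
      (\<Sum>n<length \<Xi>. \<Sum>m<n. (-1::real) ^ (m + n) *\<^sub>R
      \<omega> (gp_bracket bg bh mu L (face mu k (\<Xi> ! m)) (face mu k (\<Xi> ! n)) # map (face mu k) (rem2 m n \<Xi>)) Z)))"
      unfolding pd_def delta_r_def by (simp add: rem1_map rem2_map del: sum.atMost_Suc)
    then show ?thesis unfolding B1_def B2_def
      by (simp only: scaleR_right_distrib sum.distrib)
  qed
  have C: "A2 = B2"
  proof -
    have "A2 = (\<Sum>n<length \<Xi>. \<Sum>m<n. \<Sum>k\<le>Suc p. (-1::real) ^ k *\<^sub>R (-1::real) ^ (m + n) *\<^sub>R
      \<omega> (gp_bracket bg bh mu L (face mu k (\<Xi> ! m)) (face mu k (\<Xi> ! n)) # map (face mu k) (rem2 m n \<Xi>)) Z)"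
      unfolding A2_def
      by (intro sum.cong refl) (simp add: scaleR_right.sum face_bracket[OF CM] lxi assms(5) mult.commute del: sum.atMost_Suc)
    also have "\<dots> = (\<Sum>n<length \<Xi>. \<Sum>k\<le>Suc p. \<Sum>m<n. (-1::real) ^ k *\<^sub>R (-1::real) ^ (m + n) *\<^sub>R
      \<omega> (gp_bracket bg bh mu L (face mu k (\<Xi> ! m)) (face mu k (\<Xi> ! n)) # map (face mu k) (rem2 m n \<Xi>)) Z)"
      by (intro sum.cong refl sum.swap)
    also have "\<dots> = B2" unfolding B2_def
      by (subst sum.swap) (simp add: scaleR_right.sum del: sum.atMost_Suc)
    finally show ?thesis .
  qed
  have D: "A1 - B1 = (\<Sum>j<length \<Xi>. (-1::real) ^ j *\<^sub>R rho_r rho01 L (mu (?x j)) (?O j) Z)"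
  proof -
    have "B1 = (\<Sum>j<length \<Xi>. \<Sum>k\<le>Suc p. (-1::real) ^ j *\<^sub>R (-1::real) ^ k *\<^sub>R
      rho_r rho01 L (t_hat mu (face mu k (\<Xi> ! j))) (\<omega> (map (face mu k) (rem1 j \<Xi>))) Z)"
      unfolding B1_def
      by (subst sum.swap) (simp add: scaleR_right.sum mult.commute del: sum.atMost_Suc)
    moreover have "A1 = (\<Sum>j<length \<Xi>. \<Sum>k\<le>Suc p. (-1::real) ^ j *\<^sub>R (-1::real) ^ k *\<^sub>R
      rho_r rho01 L (t_hat mu (\<Xi> ! j)) (\<omega> (map (face mu k) (rem1 j \<Xi>))) Z)"
      unfolding A1_def by (simp add: scaleR_right.sum del: sum.atMost_Suc)
    ultimately have "A1 - B1 = (\<Sum>j<length \<Xi>. \<Sum>k\<le>Suc p. (-1::real) ^ j *\<^sub>R (-1::real) ^ k *\<^sub>R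
      (rho_r rho01 L (t_hat mu (\<Xi> ! j)) (\<omega> (map (face mu k) (rem1 j \<Xi>))) Z -
       rho_r rho01 L (t_hat mu (face mu k (\<Xi> ! j))) (\<omega> (map (face mu k) (rem1 j \<Xi>))) Z))"
      by (simp add: sum_subtractf scaleR_right_diff_distrib del: sum.atMost_Suc)
    also have "\<dots> = (\<Sum>j<length \<Xi>. (-1::real) ^ j *\<^sub>R rho_r rho01 L (mu (?x j)) (?O j) Z)"
    proof (intro sum.cong refl)
      fix j assume "j \<in> {..<length \<Xi>}"
      then have j: "j < length \<Xi>" by simp
      have z: "rho_r rho01 L (t_hat mu (\<Xi> ! j)) (\<omega> (map (face mu (Suc k)) (rem1 j \<Xi>))) Z -
       rho_r rho01 L (t_hat mu (face mu (Suc k) (\<Xi> ! j))) (\<omega> (map (face mu (Suc k)) (rem1 j \<Xi>))) Z = 0"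
        if "k \<le> p" for k
        using that_face[OF lxi[OF j], of "Suc k" mu] that mul by simp
      have e0: "rho_r rho01 L (t_hat mu (\<Xi> ! j)) (?O j) Z - rho_r rho01 L (t_hat mu (face mu 0 (\<Xi> ! j))) (?O j) Z
          = rho_r rho01 L (mu (?x j)) (?O j) Z"
        using that_face0[OF lxi[OF j] mul] rho_r_diff_y[OF CM R01y, of Z "?O j"] amO[OF j] assms(7) by simp
      show "(\<Sum>k\<le>Suc p. (-1::real) ^ j *\<^sub>R (-1::real) ^ k *\<^sub>R
        (rho_r rho01 L (t_hat mu (\<Xi> ! j)) (\<omega> (map (face mu k) (rem1 j \<Xi>))) Z -
         rho_r rho01 L (t_hat mu (face mu k (\<Xi> ! j))) (\<omega> (map (face mu k) (rem1 j \<Xi>))) Z)) =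
        (-1::real) ^ j *\<^sub>R rho_r rho01 L (mu (?x j)) (?O j) Z"
        by (simp only: sum.atMost_Suc_shift e0) (simp add: z)
    qed
    finally show ?thesis .
  qed
  have pj: "rho_r rho01 L (mu (?x j)) (?O j) Z =
    ((\<Sum>k<r. (-1::real) ^ k *\<^sub>R rho01 (mu (Z ! k)) (?O j (?x j # rem1 k Z))) +
     (\<Sum>b<r. \<Sum>a<b. (-1::real) ^ (a + b) *\<^sub>R ?O j (?x j # bg (Z ! a) (Z ! b) # rem2 a b Z)))
    + delta1 bg mu rho01 \<omega> (map (face mu 0) (rem1 j \<Xi>)) (?x j # Z)" if "j < length \<Xi>" for j
    by (rule perj[where \<omega>=\<omega> and X="map (face mu 0) (rem1 j \<Xi>)", OF CM amO[OF that] assms(7)])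
  have E: "(\<Sum>j<length \<Xi>. (-1::real) ^ j *\<^sub>R rho_r rho01 L (mu (?x j)) (?O j) Z) =
     (\<Sum>j<length \<Xi>. (-1::real) ^ j *\<^sub>R
       ((\<Sum>k<r. (-1::real) ^ k *\<^sub>R rho01 (mu (Z ! k)) (?O j (?x j # rem1 k Z))) +
        (\<Sum>b<r. \<Sum>a<b. (-1::real) ^ (a + b) *\<^sub>R ?O j (?x j # bg (Z ! a) (Z ! b) # rem2 a b Z))))
     + Delta mu (delta1 bg mu rho01 \<omega>) \<Xi> Z"
    unfolding Delta_def
    by (simp add: pj scaleR_right_distrib sum.distrib)
  have F: "(\<Sum>j<length \<Xi>. (-1::real) ^ j *\<^sub>R
       ((\<Sum>k<r. (-1::real) ^ k *\<^sub>R rho01 (mu (Z ! k)) (?O j (?x j # rem1 k Z))) +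
        (\<Sum>b<r. \<Sum>a<b. (-1::real) ^ (a + b) *\<^sub>R ?O j (?x j # bg (Z ! a) (Z ! b) # rem2 a b Z)))) =
     (if r = 1 then delta1_0 rho1 (Delta_1 mu phi \<omega>) \<Xi> Z
          else delta1 bg mu rho01 (Delta mu \<omega>) \<Xi> Z)"
  proof (cases "r = 1")
    case True
    then obtain z where Zz: "Z = [z]" using assms(7) by (cases Z) auto
    show ?thesis using True Zz
      by (simp add: delta1_0_def Delta_1_def linear_sum[OF R1] linear_cmul[OF R1] R1phi rem1_def)
  next
    case False
    have s1: "(\<Sum>k<r. (-1::real) ^ k *\<^sub>R rho01 (mu (Z ! k)) (Delta mu \<omega> \<Xi> (rem1 k Z))) =
      (\<Sum>j<length \<Xi>. (-1::real) ^ j *\<^sub>R (\<Sum>k<r. (-1::real) ^ k *\<^sub>R rho01 (mu (Z ! k)) (?O j (?x j # rem1 k Z))))"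
      unfolding Delta_def
      by (simp add: linear_sum[OF R01] linear_cmul[OF R01] scaleR_right.sum sum.swap[of _ "{..<r}"] scaleR_scaleR mult.commute)
    have s2: "(\<Sum>b<r. \<Sum>a<b. (-1::real) ^ (a + b) *\<^sub>R Delta mu \<omega> \<Xi> (bg (Z ! a) (Z ! b) # rem2 a b Z)) =
      (\<Sum>j<length \<Xi>. (-1::real) ^ j *\<^sub>R (\<Sum>b<r. \<Sum>a<b. (-1::real) ^ (a + b) *\<^sub>R ?O j (?x j # bg (Z ! a) (Z ! b) # rem2 a b Z)))"
    proof -
      have "(\<Sum>b<r. \<Sum>a<b. (-1::real) ^ (a + b) *\<^sub>R Delta mu \<omega> \<Xi> (bg (Z ! a) (Z ! b) # rem2 a b Z)) =
        (\<Sum>b<r. \<Sum>a<b. \<Sum>j<length \<Xi>. (-1::real) ^ j *\<^sub>R (-1::real) ^ (a + b) *\<^sub>R ?O j (?x j # bg (Z ! a) (Z ! b) # rem2 a b Z))"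
        unfolding Delta_def by (simp add: scaleR_right.sum scaleR_scaleR mult.commute)
      also have "\<dots> = (\<Sum>b<r. \<Sum>j<length \<Xi>. \<Sum>a<b. (-1::real) ^ j *\<^sub>R (-1::real) ^ (a + b) *\<^sub>R ?O j (?x j # bg (Z ! a) (Z ! b) # rem2 a b Z))"
        by (intro sum.cong refl sum.swap)
      also have "\<dots> = (\<Sum>j<length \<Xi>. \<Sum>b<r. \<Sum>a<b. (-1::real) ^ j *\<^sub>R (-1::real) ^ (a + b) *\<^sub>R ?O j (?x j # bg (Z ! a) (Z ! b) # rem2 a b Z))"
        by (rule sum.swap)
      also have "\<dots> = (\<Sum>j<length \<Xi>. (-1::real) ^ j *\<^sub>R (\<Sum>b<r. \<Sum>a<b. (-1::real) ^ (a + b) *\<^sub>R ?O j (?x j # bg (Z ! a) (Z ! b) # rem2 a b Z)))"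
        by (simp add: scaleR_right.sum)
      finally show ?thesis .
    qed
    show ?thesis using False unfolding delta1_def assms(7) s1 s2
      by (simp add: scaleR_right_distrib sum.distrib)
  qed
  show ?thesis using A B C D E F by (simp add: algebra_simps)
qed


end
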